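(* Let $I$ and $J$ be intervals of $B$. - If $I,J\in\mathcal{L}$, then $\mathrm{Hom}_B(k_I,k_J)\ne0$ if and only if $J\subseteq I$. - If $I,J\in\mathcal{R}$, then $\mathrm{Hom}_B(k_I,k_J)\ne0$ if and only if $I\subseteq J$.
   Context: Let $k$ be a field. The bipath poset $B$ has underlying set $(\mathbb{R}\times\{1,2\})\sqcup\{-\infty,+\infty\}$. Its order is: $x\le y$ iff $x=-\infty$, or $y=+\infty$, or $x=(s,i)$, $y=(t,i)$ with the same $i$ and $s\le t$. $B$-persistence modules are functors from $B$ (as a category) to $k$-vector spaces; $\mathrm{Hom}_B$ denotes natural transformations. An interval of $B$ is a nonempty convex and connected subset (convex: $p,q\in I$, $p\le r\le q$ imply $r\in I$; connected: any two elements are joined by a finite sequence in $I$ with consecutive ones comparable). The interval module $k_I$ is $k$ on $I$ and $0$ elsewhere, with identity maps within $I$ and zero maps otherwise. $\mathcal{L}$ is the set of intervals $\neq B$ containing $-\infty$; $\mathcal{R}$ is the set of intervals $\neq B$ containing $+\infty$. *)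

theory Defs
  imports Complex_Main
begin

text \<open>The bipath poset B = (R x {1,2}) + {-inf, +inf}. Pt s i with i :: bidx
  (One, Two) models the element (s,i).\<close>

datatype bidx = One | Two

datatype bip = NegInf | PosInf | Pt real bidx

definition bip_le :: "bip \<Rightarrow> bip \<Rightarrow> bool" where
  "bip_le x y \<longleftrightarrow> x = NegInf \<or> y = PosInf \<or>
     (\<exists>s t i. x = Pt s i \<and> y = Pt t i \<and> s \<le> t)"

definition bip_comparable :: "bip \<Rightarrow> bip \<Rightarrow> bool" where
  "bip_comparable x y \<longleftrightarrow> bip_le x y \<or> bip_le y x"

definition bip_convex :: "bip set \<Rightarrow> bool" where
  "bip_convex I \<longleftrightarrow> (\<forall>p q r. p \<in> I \<and> q \<in> I \<and> bip_le p r \<and> bip_le r q \<longrightarrow> r \<in> I)"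

definition bip_connected :: "bip set \<Rightarrow> bool" where
  "bip_connected I \<longleftrightarrow> (\<forall>p\<in>I. \<forall>q\<in>I. \<exists>xs. xs \<noteq> [] \<and> hd xs = p \<and> last xs = q \<and>
      set xs \<subseteq> I \<and> (\<forall>i. Suc i < length xs \<longrightarrow> bip_comparable (xs ! i) (xs ! Suc i)))"

definition bip_interval :: "bip set \<Rightarrow> bool" where
  "bip_interval I \<longleftrightarrow> I \<noteq> {} \<and> bip_convex I \<and> bip_connected I"

definition Lset :: "bip set set" where
  "Lset = {I. bip_interval I \<and> I \<noteq> UNIV \<and> NegInf \<in> I}"

definition Rset :: "bip set set" where
  "Rset = {I. bip_interval I \<and> I \<noteq> UNIV \<and> PosInf \<in> I}"

text \<open>A B-persistence module over the field 'k: vector spaces V x, realised as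
  subspaces of an ambient 'k-vector space 'v (scalar multiplication sc),
  and linear structure maps M x y for x <= y, functorial.\<close>

definition lin_on :: "('k \<Rightarrow> 'v::ab_group_add \<Rightarrow> 'v) \<Rightarrow> ('k \<Rightarrow> 'w \<Rightarrow> 'w) \<Rightarrow> 'v set \<Rightarrow> 'w set
    \<Rightarrow> ('v \<Rightarrow> 'w::ab_group_add) \<Rightarrow> bool" where
  "lin_on sc sc' V W f \<longleftrightarrow> (\<forall>v\<in>V. f v \<in> W) \<and>
     (\<forall>u\<in>V. \<forall>v\<in>V. f (u + v) = f u + f v) \<and>
     (\<forall>a. \<forall>v\<in>V. f (sc a v) = sc' a (f v))"

definition subspace_of :: "('k::field \<Rightarrow> 'v \<Rightarrow> 'v) \<Rightarrow> 'v::ab_group_add set \<Rightarrow> bool" where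
  "subspace_of sc V \<longleftrightarrow> 0 \<in> V \<and> (\<forall>u\<in>V. \<forall>v\<in>V. u + v \<in> V) \<and> (\<forall>a. \<forall>v\<in>V. sc a v \<in> V)"

definition pers_module :: "('k::field \<Rightarrow> 'v \<Rightarrow> 'v) \<Rightarrow> (bip \<Rightarrow> 'v::ab_group_add set)
    \<Rightarrow> (bip \<Rightarrow> bip \<Rightarrow> 'v \<Rightarrow> 'v) \<Rightarrow> bool" where
  "pers_module sc V M \<longleftrightarrow> Vector_Spaces.vector_space sc \<and>
     (\<forall>x. subspace_of sc (V x)) \<and>
     (\<forall>x y. bip_le x y \<longrightarrow> lin_on sc sc (V x) (V y) (M x y)) \<and>
     (\<forall>x. \<forall>v\<in>V x. M x x v = v) \<and>
     (\<forall>x y z. bip_le x y \<longrightarrow> bip_le y z \<longrightarrow> (\<forall>v\<in>V x. M x z v = M y z (M x y v)))"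

definition nat_trans :: "('k::field \<Rightarrow> 'v \<Rightarrow> 'v) \<Rightarrow> (bip \<Rightarrow> 'v::ab_group_add set) \<Rightarrow> (bip \<Rightarrow> bip \<Rightarrow> 'v \<Rightarrow> 'v)
    \<Rightarrow> ('k \<Rightarrow> 'w \<Rightarrow> 'w) \<Rightarrow> (bip \<Rightarrow> 'w::ab_group_add set) \<Rightarrow> (bip \<Rightarrow> bip \<Rightarrow> 'w \<Rightarrow> 'w)
    \<Rightarrow> (bip \<Rightarrow> 'v \<Rightarrow> 'w) \<Rightarrow> bool" where
  "nat_trans sc V M sc' W N f \<longleftrightarrow>
     (\<forall>x. lin_on sc sc' (V x) (W x) (f x)) \<and>
     (\<forall>x y. bip_le x y \<longrightarrow> (\<forall>v\<in>V x. f y (M x y v) = N x y (f x v)))"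

definition hom_nonzero :: "('k::field \<Rightarrow> 'v \<Rightarrow> 'v) \<Rightarrow> (bip \<Rightarrow> 'v::ab_group_add set) \<Rightarrow> (bip \<Rightarrow> bip \<Rightarrow> 'v \<Rightarrow> 'v)
    \<Rightarrow> ('k \<Rightarrow> 'w \<Rightarrow> 'w) \<Rightarrow> (bip \<Rightarrow> 'w::ab_group_add set) \<Rightarrow> (bip \<Rightarrow> bip \<Rightarrow> 'w \<Rightarrow> 'w) \<Rightarrow> bool" where
  "hom_nonzero sc V M sc' W N \<longleftrightarrow>
     (\<exists>f. nat_trans sc V M sc' W N f \<and> (\<exists>x. \<exists>v\<in>V x. f x v \<noteq> 0))"

definition int_space :: "bip set \<Rightarrow> bip \<Rightarrow> 'k::field set" where
  "int_space I x = (if x \<in> I then UNIV else {0})"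

definition int_map :: "bip set \<Rightarrow> bip \<Rightarrow> bip \<Rightarrow> 'k::field \<Rightarrow> 'k" where
  "int_map I x y = (if x \<in> I \<and> y \<in> I then id else (\<lambda>_. 0))"

definition Hom_int_nonzero :: "'k::field itself \<Rightarrow> bip set \<Rightarrow> bip set \<Rightarrow> bool" where
  "Hom_int_nonzero _ I J \<longleftrightarrow>
     hom_nonzero ((*) :: 'k \<Rightarrow> 'k \<Rightarrow> 'k) (int_space I) (int_map I) (*) (int_space J) (int_map J)"

end

theory Submission
  imports Defs
begin

lemma lin_zero:
  assumes "lin_on sc sc' V W g" "(0::'v::ab_group_add) \<in> V"
  shows "g 0 = (0::'w::ab_group_add)"
proof -
  have "g (0 + 0) = g 0 + g 0" using assms unfolding lin_on_def by blast
  then show ?thesis by simp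
qed

lemma le_neg[simp]: "bip_le NegInf x" and le_pos[simp]: "bip_le x PosInf"
  by (auto simp: bip_le_def)

lemma nz_point:
  assumes "nat_trans ((*) :: 'k::field \<Rightarrow> 'k \<Rightarrow> 'k) (int_space I) (int_map I) (*) (int_space J) (int_map J) f"
    and "v \<in> int_space I x" "f x v \<noteq> 0"
  shows "x \<in> I \<and> x \<in> J"
proof -
  have lin: "lin_on (*) (*) (int_space I x) (int_space J x) (f x)"
    using assms(1) unfolding nat_trans_def by blast
  have z: "(0::'k) \<in> int_space I x" by (simp add: int_space_def)
  have "x \<in> I"
  proof (rule ccontr)
    assume "x \<notin> I"
    then have "v = 0" using assms(2) by (simp add: int_space_def)
    then show False using lin_zero[OF lin z] assms(3) by simp
  qed
  moreover have "x \<in> J"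
  proof (rule ccontr)
    assume "x \<notin> J"
    then have "f x v \<in> {0}" using lin assms(2) unfolding lin_on_def int_space_def by auto
    then show False using assms(3) by simp
  qed
  ultimately show ?thesis by blast
qed

lemma Lpart:
  assumes "NegInf \<in> I" "NegInf \<in> J" "bip_convex J"
  shows "Hom_int_nonzero TYPE('k::field) I J \<longleftrightarrow> J \<subseteq> I"
proof
  assume "Hom_int_nonzero TYPE('k::field) I J"
  then obtain f x and v :: 'k where nt: "nat_trans (*) (int_space I) (int_map I) (*) (int_space J) (int_map J) f"
    and v: "v \<in> int_space I x" "f x v \<noteq> 0"
    unfolding Hom_int_nonzero_def hom_nonzero_def by blast
  have xIJ: "x \<in> I" "x \<in> J" using nz_point[OF nt v] by auto
  have nat: "\<And>a b w. bip_le a b \<Longrightarrow> w \<in> int_space I a \<Longrightarrow> f b (int_map I a b w) = int_map J a b (f a w)"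
    using nt unfolding nat_trans_def by blast
  have "f x v = f NegInf v"
    using nat[of NegInf x v] xIJ assms by (simp add: int_space_def int_map_def)
  then have fn: "f NegInf v \<noteq> 0" using v by simp
  show "J \<subseteq> I"
  proof
    fix y assume yJ: "y \<in> J"
    show "y \<in> I"
    proof (rule ccontr)
      assume yI: "y \<notin> I"
      have lin: "lin_on (*) (*) (int_space I y) (int_space J y) (f y)"
        using nt unfolding nat_trans_def by blast
      have "f y 0 = 0" using lin_zero[OF lin] by (simp add: int_space_def)
      moreover have "f y (int_map I NegInf y v) = int_map J NegInf y (f NegInf v)"
        using nat[of NegInf y v] assms by (simp add: int_space_def)
      ultimately show False using yI yJ assms fn by (simp add: int_map_def)
    qed
  qed
next
  assume JI: "J \<subseteq> I"
  define f :: "bip \<Rightarrow> 'k \<Rightarrow> 'k" where "f = (\<lambda>x v. if x \<in> J then v else 0)"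
  have down: "\<And>x y. bip_le x y \<Longrightarrow> y \<in> J \<Longrightarrow> x \<in> J"
    using assms(2,3) unfolding bip_convex_def by (meson le_neg)
  have "nat_trans (*) (int_space I) (int_map I) (*) (int_space J) (int_map J) f"
    unfolding nat_trans_def lin_on_def f_def
    using JI down by (auto simp: int_space_def int_map_def)
  moreover have "f NegInf 1 \<noteq> 0" using assms by (simp add: f_def)
  moreover have "(1::'k) \<in> int_space I NegInf" using assms by (simp add: int_space_def)
  ultimately show "Hom_int_nonzero TYPE('k::field) I J"
    unfolding Hom_int_nonzero_def hom_nonzero_def by blast
qed

lemma Rpart:
  assumes "PosInf \<in> I" "PosInf \<in> J" "bip_convex I"
  shows "Hom_int_nonzero TYPE('k::field) I J \<longleftrightarrow> I \<subseteq> J"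
proof
  assume "Hom_int_nonzero TYPE('k::field) I J"
  then obtain f x and v :: 'k where nt: "nat_trans (*) (int_space I) (int_map I) (*) (int_space J) (int_map J) f"
    and v: "v \<in> int_space I x" "f x v \<noteq> 0"
    unfolding Hom_int_nonzero_def hom_nonzero_def by blast
  have xIJ: "x \<in> I" "x \<in> J" using nz_point[OF nt v] by auto
  have nat: "\<And>a b w. bip_le a b \<Longrightarrow> w \<in> int_space I a \<Longrightarrow> f b (int_map I a b w) = int_map J a b (f a w)"
    using nt unfolding nat_trans_def by blast
  have "f PosInf v = f x v"
    using nat[of x PosInf v] xIJ assms by (simp add: int_space_def int_map_def)
  then have fn: "f PosInf v \<noteq> 0" using v by simp
  show "I \<subseteq> J"
  proof
    fix y assume yI: "y \<in> I"
    show "y \<in> J"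
    proof (rule ccontr)
      assume yJ: "y \<notin> J"
      have lin: "lin_on (*) (*) (int_space I y) (int_space J y) (f y)"
        using nt unfolding nat_trans_def by blast
      have "f y v \<in> int_space J y" using lin yI unfolding lin_on_def by (simp add: int_space_def)
      then have "f y v = 0" using yJ by (simp add: int_space_def)
      moreover have "f PosInf (int_map I y PosInf v) = int_map J y PosInf (f y v)"
        using nat[of y PosInf v] yI by (simp add: int_space_def)
      ultimately show False using yI yJ assms fn by (simp add: int_map_def)
    qed
  qed
next
  assume IJ: "I \<subseteq> J"
  define f :: "bip \<Rightarrow> 'k \<Rightarrow> 'k" where "f = (\<lambda>x v. if x \<in> I then v else 0)"
  have up: "\<And>x y. bip_le x y \<Longrightarrow> x \<in> I \<Longrightarrow> y \<in> I"
    using assms(1,3) unfolding bip_convex_def by (meson le_pos)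
  have "nat_trans (*) (int_space I) (int_map I) (*) (int_space J) (int_map J) f"
    unfolding nat_trans_def lin_on_def f_def
    using IJ up by (auto simp: int_space_def int_map_def)
  moreover have "f PosInf 1 \<noteq> 0" using assms by (simp add: f_def)
  moreover have "(1::'k) \<in> int_space I PosInf" using assms by (simp add: int_space_def)
  ultimately show "Hom_int_nonzero TYPE('k::field) I J"
    unfolding Hom_int_nonzero_def hom_nonzero_def by blast
qed

theorem lemma4p7:
  fixes I J :: "bip set"
  assumes "bip_interval I" and "bip_interval J"
  shows "(I \<in> Lset \<and> J \<in> Lset \<longrightarrow> (Hom_int_nonzero TYPE('k::field) I J \<longleftrightarrow> J \<subseteq> I)) \<and>
         (I \<in> Rset \<and> J \<in> Rset \<longrightarrow> (Hom_int_nonzero TYPE('k::field) I J \<longleftrightarrow> I \<subseteq> J))"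
  using assms Lpart Rpart unfolding Lset_def Rset_def bip_interval_def by blast

end
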